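(* Consider the free pre-Lie algebra with one generator, realized as $(\mathcal{T},\to)$. A monomial basis of $(\mathcal{T},\to)$ is tree-grounded if and only if there is a section $S$ of the forget-planarity projection $\pi:\mathcal{T}^{pl}\to\mathcal{T}$ such that the basis consists exactly of the monomials $m_{S(t)}$, $t\in T$, where for a planar rooted tree $\sigma$, $m_\sigma$ denotes the unique monomial whose evaluation in $(\mathcal{T}^{pl},\circ\!\!\searrow)$ equals $\sigma$; in that case the basis vectors (evaluations in $(\mathcal{T},\to)$) are the elements $\widetilde{\Psi}_S(t)=\pi\circ\Psi\circ S(t)$, $t\in T$.
   Context: $\mathcal{T}$ is the vector space spanned by the set $T$ of non-planar rooted trees, $\mathcal{T}^{pl}$ the space spanned by planar rooted trees, $\pi$ the linear forget-planarity projection; a section of $\pi$ is a linear map $S:\mathcal{T}\to\mathcal{T}^{pl}$ sending each tree $t$ to a planar tree with $\pi(S(t))=t$. The grafting $s\to t=\sum_{v\in V(t)}s\to_v t$ (graft the root of $s$ by a new edge onto vertex $v$ of $t$) makes $\mathcal{T}$ the free pre-Lie algebra on the one-vertex tree $\bullet$. The Butcher product on non-planar trees is $s\circ\!\!\rightarrow B_+(t_1\cdots t_k)=B_+(s\,t_1\cdots t_k)$, where $B_+$ attaches the roots of the given trees to a new root; on planar trees the left Butcher product $\sigma\circ\!\!\searrow B_+(\tau_1\cdots\tau_k)=B_+(\sigma\tau_1\cdots\tau_k)$ inserts $\sigma$ as leftmost branch, and $(\mathcal{T}^{pl},\circ\!\!\searrow)$ is the free magmatic algebra on $\bullet$. The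 left grafting on planar trees is $\sigma\searrow\tau=\sum_{v\in V(\tau)}\sigma\searrow_v\tau$ (graft $\sigma$ at $v$ as the leftmost branch), and $\Psi:\mathcal{T}^{pl}\to\mathcal{T}^{pl}$ is the linear map with $\Psi(\bullet)=\bullet$, $\Psi(\sigma_1\circ\!\!\searrow\sigma_2)=\Psi(\sigma_1)\searrow\Psi(\sigma_2)$. A monomial $m$ is a parenthesized word built from the letter $\bullet$ and one binary operation; $m(\bullet,\to)$, $m(\bullet,\circ\!\!\rightarrow)$, $m(\bullet,\circ\!\!\searrow)$ denote its evaluations using grafting, Butcher product, left Butcher product respectively. A monomial basis is a set of monomials whose evaluations $m(\bullet,\to)$ form a basis of $\mathcal{T}$. It is tree-grounded if the trees $m(\bullet,\circ\!\!\rightarrow)$ (its "lower-energy terms"), for $m$ in the set, are exactly the rooted trees of $T$, each obtained once. *)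

theory Defs
  imports Main HOL.Modules "HOL-Library.Multiset" "HOL-Library.Function_Algebras"
begin

datatype tree = Node "tree multiset"

datatype ptree = PNode "ptree list"

text \<open>Monomials: parenthesized words in the letter bullet and one binary operation.\<close>
datatype mon = Dot | Op mon mon

abbreviation bullet :: tree where "bullet \<equiv> Node {#}"
abbreviation pbullet :: ptree where "pbullet \<equiv> PNode []"

primrec pi :: "ptree \<Rightarrow> tree" where
  "pi (PNode cs) = Node (mset (map pi cs))"

section \<open>Vectors: finitely supported coefficient functions\<close>

definition supp :: "('a \<Rightarrow> 'k::zero) \<Rightarrow> 'a set" where
  "supp u = {x. u x \<noteq> 0}"

definition bas :: "'a \<Rightarrow> 'a \<Rightarrow> 'k::{zero,one}" where
  "bas t = (\<lambda>z. if z = t then 1 else 0)"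

definition vec_of_mset :: "'a multiset \<Rightarrow> 'a \<Rightarrow> 'k::semiring_1" where
  "vec_of_mset M = (\<lambda>z. of_nat (count M z))"

definition lin :: "('a \<Rightarrow> 'b \<Rightarrow> 'k::comm_ring_1) \<Rightarrow> ('a \<Rightarrow> 'k) \<Rightarrow> 'b \<Rightarrow> 'k" where
  "lin f u = (\<lambda>z. \<Sum>x\<in>supp u. u x * f x z)"

definition bilin :: "('a \<Rightarrow> 'b \<Rightarrow> 'c \<Rightarrow> 'k::comm_ring_1) \<Rightarrow> ('a \<Rightarrow> 'k) \<Rightarrow> ('b \<Rightarrow> 'k) \<Rightarrow> 'c \<Rightarrow> 'k" where
  "bilin f u v = (\<lambda>z. \<Sum>x\<in>supp u. \<Sum>y\<in>supp v. u x * v y * f x y z)"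

definition scl :: "'k::field \<Rightarrow> ('a \<Rightarrow> 'k) \<Rightarrow> 'a \<Rightarrow> 'k" where
  "scl c u = (\<lambda>x. c * u x)"

lemma size_mem_tree: "c \<in># ts \<Longrightarrow> size c < Suc (size_multiset size ts)"
proof -
  assume "c \<in># ts"
  then obtain M where "ts = add_mset c M" by (blast dest: multi_member_split)
  then show ?thesis by simp
qed

text \<open>Grafting: the multiset of all trees \<open>s \<rightarrow>\<^sub>v t\<close>, v ranging over the vertices of t.\<close>
function graft :: "tree \<Rightarrow> tree \<Rightarrow> tree multiset" where
  "graft s (Node ts) =
     add_mset (Node (add_mset s ts))
       (\<Sum>\<^sub># (image_mset (\<lambda>c. image_mset (\<lambda>r. Node (add_mset r (ts - {#c#}))) (graft s c)) ts))"
  by pat_completeness auto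
termination
  by (relation "measure (\<lambda>(s, t). size t)") (auto simp: size_mem_tree)

fun butcher :: "tree \<Rightarrow> tree \<Rightarrow> tree" where
  "butcher s (Node ts) = Node (add_mset s ts)"

fun lbutcher :: "ptree \<Rightarrow> ptree \<Rightarrow> ptree" where
  "lbutcher \<sigma> (PNode cs) = PNode (\<sigma> # cs)"

lemma size_mem_ptree: "c \<in> set cs \<Longrightarrow> size c < Suc (size_list size cs)"
  by (induct cs) auto

text \<open>Left grafting on planar trees: the multiset of all \<open>\<sigma> \<searrow>\<^sub>v \<tau>\<close>
  (graft \<open>\<sigma>\<close> at vertex v of \<open>\<tau>\<close> as leftmost branch).\<close>
function lgraft :: "ptree \<Rightarrow> ptree \<Rightarrow> ptree multiset" where
  "lgraft \<sigma> (PNode cs) =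
     add_mset (PNode (\<sigma> # cs))
       (\<Sum>\<^sub># (mset (map (\<lambda>(i, c). image_mset (\<lambda>r. PNode (cs[i := r])) (lgraft \<sigma> c))
                       (zip [0..<length cs] cs))))"
  by pat_completeness auto
termination
  by (relation "measure (\<lambda>(s, t). size t)") (auto simp: size_mem_ptree dest: set_zip_rightD)

definition graftV :: "(tree \<Rightarrow> 'k::field) \<Rightarrow> (tree \<Rightarrow> 'k) \<Rightarrow> tree \<Rightarrow> 'k" where
  "graftV = bilin (\<lambda>s t. vec_of_mset (graft s t))"

definition lgraftV :: "(ptree \<Rightarrow> 'k::field) \<Rightarrow> (ptree \<Rightarrow> 'k) \<Rightarrow> ptree \<Rightarrow> 'k" where
  "lgraftV = bilin (\<lambda>s t. vec_of_mset (lgraft s t))"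

definition piV :: "(ptree \<Rightarrow> 'k::field) \<Rightarrow> tree \<Rightarrow> 'k" where
  "piV = lin (\<lambda>\<sigma>. bas (pi \<sigma>))"

primrec ev_graft :: "mon \<Rightarrow> tree \<Rightarrow> 'k::field" where
  "ev_graft Dot = bas bullet"
| "ev_graft (Op a b) = graftV (ev_graft a) (ev_graft b)"

primrec ev_butcher :: "mon \<Rightarrow> tree" where
  "ev_butcher Dot = bullet"
| "ev_butcher (Op a b) = butcher (ev_butcher a) (ev_butcher b)"

primrec ev_lbutcher :: "mon \<Rightarrow> ptree" where
  "ev_lbutcher Dot = pbullet"
| "ev_lbutcher (Op a b) = lbutcher (ev_lbutcher a) (ev_lbutcher b)"

definition mon_of :: "ptree \<Rightarrow> mon" where
  "mon_of \<sigma> = (THE m. ev_lbutcher m = \<sigma>)"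

text \<open>\<open>\<Psi>(\<bullet>) = \<bullet>\<close>, \<open>\<Psi>(\<sigma>\<^sub>1 \<circ>\<searrow> \<sigma>\<^sub>2) = \<Psi>(\<sigma>\<^sub>1) \<searrow> \<Psi>(\<sigma>\<^sub>2)\<close>; note
  \<open>PNode (c # cs) = c \<circ>\<searrow> PNode cs\<close>.\<close>
fun Psi :: "ptree \<Rightarrow> ptree \<Rightarrow> 'k::field" where
  "Psi (PNode []) = bas pbullet"
| "Psi (PNode (c # cs)) = lgraftV (Psi c) (Psi (PNode cs))"

text \<open>A set of monomials whose evaluations in (T, grafting) form a basis of the space of
  finitely supported coefficient functions on T (the family is indexed by B, hence injective).\<close>
definition monomial_basis :: "'k::field itself \<Rightarrow> mon set \<Rightarrow> bool" where
  "monomial_basis _ B \<longleftrightarrow>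
     inj_on (ev_graft :: mon \<Rightarrow> tree \<Rightarrow> 'k) B
     \<and> \<not> module.dependent (scl :: 'k \<Rightarrow> _) ((ev_graft :: mon \<Rightarrow> tree \<Rightarrow> 'k) ` B)
     \<and> module.span (scl :: 'k \<Rightarrow> _) ((ev_graft :: mon \<Rightarrow> tree \<Rightarrow> 'k) ` B)
         = {u :: tree \<Rightarrow> 'k. finite (supp u)}"

text \<open>Tree-grounded: the lower-energy terms are exactly the trees of T, each obtained once.\<close>
definition tree_grounded :: "mon set \<Rightarrow> bool" where
  "tree_grounded B \<longleftrightarrow> bij_betw ev_butcher B (UNIV :: tree set)"

definition is_section :: "(tree \<Rightarrow> ptree) \<Rightarrow> bool" where
  "is_section S \<longleftrightarrow> (\<forall>t. pi (S t) = t)"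

end

theory Submission
  imports Defs
begin

lemma image_mset_sum_list: "image_mset f (sum_list xs) = sum_list (map (image_mset f) xs)"
  by (induct xs) auto

lemma sum_mset_mset: "sum_mset (mset xs) = sum_list xs"
  by (induct xs) auto

lemma sum_mset_image_mset: "sum_mset (image_mset f (mset xs)) = sum_list (map f xs)"
  by (induct xs) auto

lemma pi_lgraft: "image_mset pi (lgraft \<sigma> \<tau>) = graft (pi \<sigma>) (pi \<tau>)"
proof (induct \<tau>)
  case (PNode cs)
  define G where "G = (\<lambda>c. image_mset (\<lambda>r. Node (add_mset r (mset (map pi cs) - {#c#}))) (graft (pi \<sigma>) c))"
  define F where "F = (\<lambda>(i, c). image_mset (\<lambda>r. PNode (cs[i := r])) (lgraft \<sigma> c))"
  have eq: "map (image_mset pi \<circ> F) (zip [0..<length cs] cs) = map (G \<circ> pi \<circ> snd) (zip [0..<length cs] cs)"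
  proof (rule map_cong[OF refl])
    fix p assume "p \<in> set (zip [0..<length cs] cs)"
    then obtain i where i: "i < length cs" "p = (i, cs ! i)" by (auto simp: set_zip)
    have "cs ! i \<in> set cs" using i by simp
    then have IH: "image_mset pi (lgraft \<sigma> (cs ! i)) = graft (pi \<sigma>) (pi (cs ! i))" using PNode by blast
    have "(image_mset pi \<circ> F) p = image_mset (\<lambda>r. pi (PNode (cs[i := r]))) (lgraft \<sigma> (cs ! i))"
      using i by (simp add: F_def multiset.map_comp o_def)
    also have "\<dots> = image_mset (\<lambda>r. Node (add_mset (pi r) (mset (map pi cs) - {#pi (cs ! i)#}))) (lgraft \<sigma> (cs ! i))"
      using i by (intro image_mset_cong) (simp add: map_update mset_update)
    also have "\<dots> = image_mset (\<lambda>r. Node (add_mset r (mset (map pi cs) - {#pi (cs ! i)#}))) (image_mset pi (lgraft \<sigma> (cs ! i)))"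
      by (simp add: multiset.map_comp o_def)
    also have "\<dots> = (G \<circ> pi \<circ> snd) p" using i IH by (simp add: G_def)
    finally show "(image_mset pi \<circ> F) p = (G \<circ> pi \<circ> snd) p" .
  qed
  have "image_mset pi (lgraft \<sigma> (PNode cs)) = add_mset (pi (PNode (\<sigma> # cs))) (sum_list (map (image_mset pi \<circ> F) (zip [0..<length cs] cs)))"
    by (simp add: F_def sum_mset_image_mset image_mset_sum_list)
  also have "\<dots> = add_mset (pi (PNode (\<sigma> # cs))) (sum_list (map (G \<circ> pi) cs))"
    unfolding eq by (simp flip: map_map)
  also have "\<dots> = graft (pi \<sigma>) (pi (PNode cs))"
    by (simp add: G_def sum_mset_image_mset multiset.map_comp) 
  finally show ?case .
qed

fun mof :: "ptree \<Rightarrow> mon" where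
  "mof (PNode []) = Dot"
| "mof (PNode (c # cs)) = Op (mof c) (mof (PNode cs))"

lemma ev_mof: "ev_lbutcher (mof \<sigma>) = \<sigma>"
  by (induct \<sigma> rule: mof.induct) auto

lemma ev_inj: "ev_lbutcher m = ev_lbutcher m' \<Longrightarrow> m = m'"
proof (induct m arbitrary: m')
  case Dot then show ?case by (cases m'; cases "ev_lbutcher (case m' of Op x y \<Rightarrow> y)") auto
next
  case (Op a b) then show ?case
    by (cases m'; cases "ev_lbutcher b"; cases "ev_lbutcher (case m' of Op x y \<Rightarrow> y)")
       (auto elim!: lbutcher.elims)
qed


lemma lin_sup:
  assumes "finite A" "supp u \<subseteq> A"
  shows "lin f u z = (\<Sum>x\<in>A. u x * f x z)"
  unfolding lin_def using assms by (auto intro!: sum.mono_neutral_left simp: supp_def)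

lemma bilin_sup:
  assumes "finite A" "supp u \<subseteq> A" "finite C" "supp v \<subseteq> C"
  shows "bilin f u v z = (\<Sum>x\<in>A. \<Sum>y\<in>C. u x * v y * f x y z)"
proof -
  have "bilin f u v z = (\<Sum>x\<in>supp u. \<Sum>y\<in>C. u x * v y * f x y z)"
    unfolding bilin_def
    by (rule sum.cong[OF refl], rule sum.mono_neutral_left) (use assms in \<open>auto simp: supp_def\<close>)
  also have "\<dots> = (\<Sum>x\<in>A. \<Sum>y\<in>C. u x * v y * f x y z)"
    using assms by (auto intro!: sum.mono_neutral_left simp: supp_def)
  finally show ?thesis .
qed

lemma supp_bas: "supp (bas t :: _ \<Rightarrow> 'k::{zero_neq_one}) = {t}"
  by (auto simp: supp_def bas_def)

definition W where "W U V = (\<Union>x\<in>U. \<Union>y\<in>V. set_mset (lgraft x y))"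

lemma finite_W: "finite U \<Longrightarrow> finite V \<Longrightarrow> finite (W U V)"
  by (auto simp: W_def)

lemma supp_lgraftV:
  assumes "finite (supp u)" "finite (supp v)"
  shows "supp (lgraftV u v :: ptree \<Rightarrow> 'k::field) \<subseteq> W (supp u) (supp v)"
proof
  fix z assume z: "z \<in> supp (lgraftV u v)"
  show "z \<in> W (supp u) (supp v)"
  proof (rule ccontr)
    assume "z \<notin> W (supp u) (supp v)"
    then have "\<forall>x\<in>supp u. \<forall>y\<in>supp v. count (lgraft x y) z = 0"
      by (auto simp: W_def count_eq_zero_iff)
    then have "lgraftV u v z = 0"
      by (simp add: lgraftV_def bilin_def vec_of_mset_def)
    then show False using z by (simp add: supp_def)
  qed
qed

lemma finite_supp_lgraftV:
  "finite (supp u) \<Longrightarrow> finite (supp v) \<Longrightarrow> finite (supp (lgraftV u v :: ptree \<Rightarrow> 'k::field))"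
  by (meson finite_W finite_subset supp_lgraftV)

lemma finite_supp_Psi: "finite (supp (Psi \<sigma> :: ptree \<Rightarrow> 'k::field))"
  by (induct \<sigma> rule: Psi.induct) (auto simp: supp_bas finite_supp_lgraftV)

lemma count_sum:
  assumes "finite A" "set_mset M \<subseteq> A"
  shows "(\<Sum>w\<in>A. (of_nat (count M w) :: 'k::field) * bas (pi w) z) = of_nat (count (image_mset pi M) z)"
  using assms(2)
proof (induct M)
  case empty then show ?case by simp
next
  case (add a M)
  then have aA: "a \<in> A" by auto
  have "(\<Sum>w\<in>A. (of_nat (count (add_mset a M) w) :: 'k) * bas (pi w) z)
     = (\<Sum>w\<in>A. of_nat (count M w) * bas (pi w) z) + (\<Sum>w\<in>A. (if w = a then bas (pi w) z else 0))"
    by (subst sum.distrib[symmetric]) (rule sum.cong, auto simp: distrib_right)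
  also have "\<dots> = of_nat (count (image_mset pi M) z) + bas (pi a) z"
    using add aA assms(1) by simp
  also have "\<dots> = of_nat (count (image_mset pi (add_mset a M)) z)"
    by (simp add: bas_def)
  finally show ?case .
qed

lemma collapse:
  assumes "finite U"
  shows "(\<Sum>s\<in>f ` U. (\<Sum>x\<in>U. u x * bas (f x) s) * (g s :: 'k::field)) = (\<Sum>x\<in>U. u x * g (f x))"
proof -
  have "(\<Sum>s\<in>f ` U. (\<Sum>x\<in>U. u x * bas (f x) s) * g s) = (\<Sum>s\<in>f ` U. \<Sum>x\<in>U. u x * (bas (f x) s * g s))"
    by (simp add: sum_distrib_right mult.assoc)
  also have "\<dots> = (\<Sum>x\<in>U. \<Sum>s\<in>f ` U. u x * (bas (f x) s * g s))"
    by (rule sum.swap)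
  also have "\<dots> = (\<Sum>x\<in>U. u x * g (f x))"
  proof (rule sum.cong[OF refl])
    fix x assume x: "x \<in> U"
    have "\<And>s. u x * (bas (f x) s * g s) = (if f x = s then u x * g s else 0)"
      by (auto simp: bas_def)
    then show "(\<Sum>s\<in>f ` U. u x * (bas (f x) s * g s)) = u x * g (f x)"
      using assms x by (simp add: sum.delta)
  qed
  finally show ?thesis .
qed

lemma piV_lgraftV:
  assumes fu: "finite (supp u)" and fv: "finite (supp v)"
  shows "piV (lgraftV u v :: ptree \<Rightarrow> 'k::field) = graftV (piV u) (piV v)"
proof
  fix z
  let ?U = "supp u" and ?V = "supp v"
  have fW: "finite (W ?U ?V)" using fu fv by (rule finite_W)
  have sub: "\<And>x y. x \<in> ?U \<Longrightarrow> y \<in> ?V \<Longrightarrow> set_mset (lgraft x y) \<subseteq> W ?U ?V"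
    by (auto simp: W_def)
  have "piV (lgraftV u v) z = (\<Sum>w\<in>W ?U ?V. lgraftV u v w * bas (pi w) z)"
    unfolding piV_def by (rule lin_sup[OF fW supp_lgraftV[OF fu fv]])
  also have "\<dots> = (\<Sum>w\<in>W ?U ?V. \<Sum>x\<in>?U. \<Sum>y\<in>?V. u x * v y * (of_nat (count (lgraft x y) w) * bas (pi w) z))"
    by (simp add: lgraftV_def bilin_def vec_of_mset_def sum_distrib_right mult.assoc)
  also have "\<dots> = (\<Sum>x\<in>?U. \<Sum>y\<in>?V. u x * v y * (\<Sum>w\<in>W ?U ?V. of_nat (count (lgraft x y) w) * bas (pi w) z))"
    by (simp add: sum_distrib_left sum.swap[of _ "W ?U ?V"] sum.swap[of _ "W ?U ?V" ?V])
  also have "\<dots> = (\<Sum>x\<in>?U. \<Sum>y\<in>?V. u x * v y * of_nat (count (graft (pi x) (pi y)) z))"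
    by (intro sum.cong refl) (simp add: count_sum[OF fW sub] pi_lgraft)
  finally have L: "piV (lgraftV u v) z = \<dots>" .
  have pu: "\<And>s. piV u s = (\<Sum>x\<in>?U. u x * bas (pi x) s)"
    unfolding piV_def by (rule lin_sup) (auto simp: fu fv)
  have pv: "\<And>s. piV v s = (\<Sum>x\<in>?V. v x * bas (pi x) s)"
    unfolding piV_def by (rule lin_sup) (auto simp: fu fv)
  have sU: "supp (piV u :: tree \<Rightarrow> 'k) \<subseteq> pi ` ?U"
  proof
    fix s assume s: "s \<in> supp (piV u)"
    show "s \<in> pi ` ?U"
    proof (rule ccontr)
      assume "s \<notin> pi ` ?U"
      then have "piV u s = 0" unfolding pu by (intro sum.neutral) (auto simp: bas_def)
      then show False using s by (simp add: supp_def)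
    qed
  qed
  have sV: "supp (piV v :: tree \<Rightarrow> 'k) \<subseteq> pi ` ?V"
  proof
    fix s assume s: "s \<in> supp (piV v)"
    show "s \<in> pi ` ?V"
    proof (rule ccontr)
      assume "s \<notin> pi ` ?V"
      then have "piV v s = 0" unfolding pv by (intro sum.neutral) (auto simp: bas_def)
      then show False using s by (simp add: supp_def)
    qed
  qed
  have "graftV (piV u) (piV v) z = (\<Sum>s\<in>pi ` ?U. \<Sum>t\<in>pi ` ?V. piV u s * piV v t * of_nat (count (graft s t) z))"
    unfolding graftV_def using fu fv sU sV by (subst bilin_sup) (auto simp: vec_of_mset_def)
  also have "\<dots> = (\<Sum>s\<in>pi ` ?U. piV u s * (\<Sum>t\<in>pi ` ?V. piV v t * of_nat (count (graft s t) z)))"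
    by (simp add: sum_distrib_left mult.assoc)
  also have "\<dots> = (\<Sum>x\<in>?U. u x * (\<Sum>t\<in>pi ` ?V. piV v t * of_nat (count (graft (pi x) t) z)))"
    unfolding pu by (rule collapse[OF fu])
  also have "\<dots> = (\<Sum>x\<in>?U. u x * (\<Sum>y\<in>?V. v y * of_nat (count (graft (pi x) (pi y)) z)))"
    unfolding pv by (intro sum.cong refl arg_cong[where f="\<lambda>a. _ * a"] collapse[OF fv])
  also have "\<dots> = (\<Sum>x\<in>?U. \<Sum>y\<in>?V. u x * v y * of_nat (count (graft (pi x) (pi y)) z))"
    by (simp add: sum_distrib_left mult.assoc)
  finally show "piV (lgraftV u v) z = graftV (piV u) (piV v) z" using L by simp
qed

lemma ev_graft_Psi: "(ev_graft m :: tree \<Rightarrow> 'k::field) = piV (Psi (ev_lbutcher m))"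
proof (induct m)
  case Dot
  show ?case
  proof
    fix z
    have "piV (Psi pbullet :: ptree \<Rightarrow> 'k) z = (\<Sum>x\<in>{pbullet}. bas pbullet x * bas (pi x) z)"
      unfolding piV_def by (simp, subst lin_sup[where A="{pbullet}"]) (auto simp: supp_bas)
    then show "(ev_graft Dot :: tree \<Rightarrow> 'k) z = piV (Psi (ev_lbutcher Dot)) z"
      by (simp add: bas_def)
  qed
next
  case (Op a b)
  obtain cs where cs: "ev_lbutcher b = PNode cs" by (cases "ev_lbutcher b")
  have "(ev_graft (Op a b) :: tree \<Rightarrow> 'k) = graftV (piV (Psi (ev_lbutcher a))) (piV (Psi (ev_lbutcher b)))"
    using Op by simp
  also have "\<dots> = piV (lgraftV (Psi (ev_lbutcher a)) (Psi (ev_lbutcher b)) :: ptree \<Rightarrow> 'k)"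
    by (rule piV_lgraftV[symmetric]) (rule finite_supp_Psi)+
  also have "\<dots> = piV (Psi (ev_lbutcher (Op a b)))" using cs by simp
  finally show ?case .
qed


lemma mon_of_eq: "mon_of \<sigma> = mof \<sigma>"
  unfolding mon_of_def by (rule the_equality) (auto simp: ev_mof intro: ev_inj)

lemma ev_lbutcher_mon_of: "ev_lbutcher (mon_of \<sigma>) = \<sigma>"
  by (simp add: mon_of_eq ev_mof)

lemma mon_of_ev: "mon_of (ev_lbutcher m) = m"
  by (rule ev_inj) (simp add: ev_lbutcher_mon_of)

lemma ev_butcher_pi: "ev_butcher m = pi (ev_lbutcher m)"
proof (induct m)
  case (Op a b) then show ?case by (cases "ev_lbutcher b") simp
qed simp

theorem lemma3p4:
  fixes B :: "mon set"
  assumes "monomial_basis TYPE('k::field_char_0) B"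
  shows "(tree_grounded B \<longleftrightarrow>
            (\<exists>S. is_section S \<and> B = (\<lambda>t. mon_of (S t)) ` UNIV))
       \<and> (\<forall>S. is_section S \<and> B = (\<lambda>t. mon_of (S t)) ` UNIV \<longrightarrow>
            (\<forall>t. (ev_graft (mon_of (S t)) :: tree \<Rightarrow> 'k) = piV (Psi (S t))))"
proof (intro conjI allI impI)
  fix S t
  show "(ev_graft (mon_of (S t)) :: tree \<Rightarrow> 'k) = piV (Psi (S t))"
    by (simp add: ev_graft_Psi ev_lbutcher_mon_of)
next
  show "tree_grounded B \<longleftrightarrow> (\<exists>S. is_section S \<and> B = (\<lambda>t. mon_of (S t)) ` UNIV)"
  proof
    assume tg: "tree_grounded B"
    then have bij: "bij_betw ev_butcher B UNIV" by (simp add: tree_grounded_def)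
    define S where "S t = ev_lbutcher (inv_into B ev_butcher t)" for t
    have "is_section S"
      unfolding is_section_def S_def
      by (metis bij bij_betw_inv_into_right ev_butcher_pi iso_tuple_UNIV_I)
    moreover have "B = (\<lambda>t. mon_of (S t)) ` UNIV"
    proof -
      have "(\<lambda>t. mon_of (S t)) = inv_into B ev_butcher" by (simp add: S_def mon_of_ev fun_eq_iff)
      moreover have "range (inv_into B ev_butcher) = B" using bij_betw_inv_into[OF bij] unfolding bij_betw_def by simp
      ultimately show ?thesis by metis
    qed
    ultimately show "\<exists>S. is_section S \<and> B = (\<lambda>t. mon_of (S t)) ` UNIV" by blast
  next
    assume "\<exists>S. is_section S \<and> B = (\<lambda>t. mon_of (S t)) ` UNIV"
    then obtain S where S: "is_section S" and B: "B = (\<lambda>t. mon_of (S t)) ` UNIV" by blast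
    have e: "\<And>t. ev_butcher (mon_of (S t)) = t"
      using S by (simp add: ev_butcher_pi ev_lbutcher_mon_of is_section_def)
    show "tree_grounded B"
      unfolding tree_grounded_def bij_betw_def B
    proof
      show "inj_on ev_butcher (range (\<lambda>t. mon_of (S t)))"
        by (rule inj_onI) (auto simp: e)
      show "ev_butcher ` range (\<lambda>t. mon_of (S t)) = UNIV"
        using e by (metis (no_types, lifting) UNIV_eq_I range_eqI image_image)
    qed
  qed
qed

end
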